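(* Let $D\ge1$ and let $\mathcal{F}$ be a collection of pairwise non-overlapping simplices on $\gamma_D$ in $\mathbb{R}^D$ whose vertex sets have union $V$ with $D+1\le|V|\le D+2$. Then $\mathcal{F}$ can be extended to a triangulation of $\mathrm{conv}(V)$ without adding new vertices, i.e. there is a triangulation of $\mathrm{conv}(V)$ with all vertices in $V$ containing every simplex of $\mathcal{F}$.
   Context: $\gamma_D=\{(t,t^2,\dots,t^D):t\in\mathbb{R}\}$. A simplex on $\gamma_D$ is $\mathrm{conv}(\sigma)$ for $\sigma\subseteq\gamma_D$ with $|\sigma|\le D+1$. Simplices overlap if $\mathrm{conv}(\sigma)\cap\mathrm{conv}(\tau)\supsetneq\mathrm{conv}(\sigma\cap\tau)$. *)

theory Defs
  imports "HOL-Analysis.Analysis"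
begin

text \<open>Points of R^D are represented as real ^ 'n with D = CARD('n).  Since the
coordinate type 'n carries no canonical order, an enumeration e of the coordinates
by {1..D} is fixed; the coordinate with index e i = k carries t^k.\<close>

definition coord_enum :: "('n::finite \<Rightarrow> nat) \<Rightarrow> bool" where
  "coord_enum e \<longleftrightarrow> bij_betw e UNIV {1..CARD('n)}"

definition moment_pt :: "('n::finite \<Rightarrow> nat) \<Rightarrow> real \<Rightarrow> real ^ 'n" where
  "moment_pt e t = (\<chi> i. t ^ (e i))"

definition moment_curve :: "('n::finite \<Rightarrow> nat) \<Rightarrow> (real ^ 'n) set" where
  "moment_curve e = range (moment_pt e)"

definition curve_simplex :: "('n::finite \<Rightarrow> nat) \<Rightarrow> (real ^ 'n) set \<Rightarrow> bool" where
  "curve_simplex e \<sigma> \<longleftrightarrow> \<sigma> \<subseteq> moment_curve e \<and> finite \<sigma> \<and> card \<sigma> \<le> CARD('n) + 1"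

definition overlap :: "'a::real_vector set \<Rightarrow> 'a set \<Rightarrow> bool" where
  "overlap \<sigma> \<tau> \<longleftrightarrow> convex hull \<sigma> \<inter> convex hull \<tau> \<supset> convex hull (\<sigma> \<inter> \<tau>)"

definition triangulation_of :: "'a::euclidean_space set set \<Rightarrow> 'a set \<Rightarrow> bool" where
  "triangulation_of T V \<longleftrightarrow>
     finite T \<and>
     (\<forall>\<sigma>\<in>T. \<sigma> \<subseteq> V \<and> \<not> affine_dependent \<sigma>) \<and>
     (\<forall>\<sigma>\<in>T. \<forall>\<tau>. \<tau> \<subseteq> \<sigma> \<longrightarrow> \<tau> \<in> T) \<and>
     (\<forall>\<sigma>\<in>T. \<forall>\<tau>\<in>T. convex hull \<sigma> \<inter> convex hull \<tau> = convex hull (\<sigma> \<inter> \<tau>)) \<and>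
     \<Union> ((\<lambda>\<sigma>. convex hull \<sigma>) ` T) = convex hull V"

end

theory Submission imports Defs "HOL-Computational_Algebra.Polynomial" begin

lemma moment_indep:
  fixes e :: "'n::finite \<Rightarrow> nat" and W :: "(real^'n) set"
  assumes ce: "coord_enum e" and Wm: "W \<subseteq> moment_curve e" and fin: "finite W"
    and cW: "card W \<le> CARD('n) + 1"
  shows "\<not> affine_dependent W"
proof
  assume dep: "affine_dependent W"
  have bij: "bij_betw e UNIV {1..CARD('n)}" using ce unfolding coord_enum_def .
  have "(1::nat) \<in> {1..CARD('n)}" by simp
  then obtain i1 where i1: "e i1 = 1" using bij by (metis bij_betw_def imageE)
  have coord: "w $ i = (w $ i1) ^ (e i)" if "w \<in> W" for w i
  proof -
    from that Wm obtain s where "w = moment_pt e s" unfolding moment_curve_def by auto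
    then show ?thesis by (simp add: moment_pt_def i1)
  qed
  define t where "t w = w $ i1" for w :: "real^'n"
  have inj: "inj_on t W"
  proof
    fix x y assume "x \<in> W" "y \<in> W" "t x = t y"
    then show "x = y" using coord unfolding t_def by (metis vec_eq_iff)
  qed
  obtain c w0 where c0: "sum c W = 0" and w0: "w0 \<in> W" "c w0 \<noteq> 0"
     and cs: "(\<Sum>w\<in>W. c w *\<^sub>R w) = 0"
    using dep fin by (auto simp: affine_dependent_explicit_finite)
  have mom: "(\<Sum>w\<in>W. c w * t w ^ k) = 0" if "k \<le> CARD('n)" for k
  proof (cases "k = 0")
    case True then show ?thesis using c0 by simp
  next
    case False
    then have "k \<in> {1..CARD('n)}" using that by simp
    then obtain i where i: "e i = k" using bij by (metis bij_betw_def imageE)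
    have "(\<Sum>w\<in>W. c w *\<^sub>R w) $ i = 0" using cs by simp
    then have "(\<Sum>w\<in>W. c w * w $ i) = 0" by simp
    moreover have "(\<Sum>w\<in>W. c w * w $ i) = (\<Sum>w\<in>W. c w * t w ^ k)"
      by (rule sum.cong) (simp_all add: coord[of _ i] t_def i)
    ultimately show ?thesis by simp
  qed
  define p where "p = (\<Prod>w\<in>W-{w0}. [:- t w, 1:])"
  have "degree p \<le> sum (degree \<circ> (\<lambda>w. [:- t w, 1:])) (W-{w0})"
    unfolding p_def by (rule degree_prod_sum_le) (use fin in simp)
  also have "\<dots> = card (W - {w0})" by simp
  also have "\<dots> \<le> CARD('n)" using cW w0 fin by (simp add: card_Diff_singleton)
  finally have dp: "degree p \<le> CARD('n)" .
  have "(\<Sum>w\<in>W. c w * poly p (t w)) = (\<Sum>w\<in>W. \<Sum>i\<le>degree p. coeff p i * (c w * t w ^ i))"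
    by (simp add: poly_altdef sum_distrib_left mult.assoc mult.left_commute)
  also have "\<dots> = (\<Sum>i\<le>degree p. coeff p i * (\<Sum>w\<in>W. c w * t w ^ i))"
    by (subst sum.swap) (simp add: sum_distrib_left)
  also have "\<dots> = 0" using mom dp by simp
  finally have S0: "(\<Sum>w\<in>W. c w * poly p (t w)) = 0" .
  have pv: "poly p (t w) = (\<Prod>w'\<in>W-{w0}. t w - t w')" for w
    unfolding p_def by (simp add: poly_prod)
  have "(\<Sum>w\<in>W. c w * poly p (t w)) = c w0 * poly p (t w0)"
  proof -
    have "(\<Sum>w\<in>W. c w * poly p (t w)) = c w0 * poly p (t w0) + (\<Sum>w\<in>W-{w0}. c w * poly p (t w))"
      using fin w0 by (simp add: sum.remove)
    moreover have "(\<Sum>w\<in>W-{w0}. c w * poly p (t w)) = 0"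
    proof (rule sum.neutral, rule ballI)
      fix w assume "w \<in> W - {w0}"
      then have "poly p (t w) = 0" unfolding pv using fin by (subst prod_zero_iff) auto
      then show "c w * poly p (t w) = 0" by simp
    qed
    ultimately show ?thesis by simp
  qed
  moreover have "poly p (t w0) \<noteq> 0" unfolding pv using fin inj w0
    by (subst prod_zero_iff) (auto simp: inj_on_def)
  ultimately show False using S0 w0 by simp
qed

lemma ext_sum:
  fixes a :: "'a::real_vector \<Rightarrow> real"
  assumes "finite V" "\<sigma> \<subseteq> V"
  shows "(\<Sum>v\<in>V. (if v \<in> \<sigma> then a v else 0)) = sum a \<sigma>"
    and "(\<Sum>v\<in>V. (if v \<in> \<sigma> then a v else 0) *\<^sub>R v) = (\<Sum>v\<in>\<sigma>. a v *\<^sub>R v)"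
proof -
  have "V \<inter> \<sigma> = \<sigma>" using assms by auto
  then show "(\<Sum>v\<in>V. (if v \<in> \<sigma> then a v else 0)) = sum a \<sigma>"
    using sum.inter_restrict[OF assms(1), of a \<sigma>] by simp
  have "(\<Sum>v\<in>V. (if v \<in> \<sigma> then a v else 0) *\<^sub>R v) = (\<Sum>v\<in>V. (if v \<in> \<sigma> then a v *\<^sub>R v else 0))"
    by (rule sum.cong) auto
  also have "\<dots> = (\<Sum>v\<in>V \<inter> \<sigma>. a v *\<^sub>R v)"
    using sum.inter_restrict[OF assms(1), of "\<lambda>v. a v *\<^sub>R v" \<sigma>] by simp
  finally show "(\<Sum>v\<in>V. (if v \<in> \<sigma> then a v else 0) *\<^sub>R v) = (\<Sum>v\<in>\<sigma>. a v *\<^sub>R v)"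
    using \<open>V \<inter> \<sigma> = \<sigma>\<close> by simp
qed

lemma core_dep:
  fixes a b :: "'a::real_vector \<Rightarrow> real"
  assumes "finite V" "\<sigma> \<subseteq> V" "\<tau> \<subseteq> V"
    and "sum a \<sigma> = 1" "(\<Sum>v\<in>\<sigma>. a v *\<^sub>R v) = x"
    and "sum b \<tau> = 1" "(\<Sum>v\<in>\<tau>. b v *\<^sub>R v) = x"
  shows "(\<Sum>v\<in>V. (if v \<in> \<sigma> then a v else 0) - (if v \<in> \<tau> then b v else 0)) = 0"
    and "(\<Sum>v\<in>V. ((if v \<in> \<sigma> then a v else 0) - (if v \<in> \<tau> then b v else 0)) *\<^sub>R v) = 0"
proof -
  show "(\<Sum>v\<in>V. (if v \<in> \<sigma> then a v else 0) - (if v \<in> \<tau> then b v else 0)) = 0"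
    using ext_sum(1)[OF assms(1,2), of a] ext_sum(1)[OF assms(1,3), of b] assms
    by (simp add: sum_subtractf)
  show "(\<Sum>v\<in>V. ((if v \<in> \<sigma> then a v else 0) - (if v \<in> \<tau> then b v else 0)) *\<^sub>R v) = 0"
    using ext_sum(2)[OF assms(1,2), of a] ext_sum(2)[OF assms(1,3), of b] assms
    by (simp add: sum_subtractf scaleR_left_diff_distrib)
qed

lemma eq_case:
  fixes a b :: "'a::real_vector \<Rightarrow> real"
  assumes "finite V" "\<sigma> \<subseteq> V" "\<tau> \<subseteq> V"
    and "\<forall>v\<in>\<sigma>. 0 \<le> a v" "sum a \<sigma> = 1" "(\<Sum>v\<in>\<sigma>. a v *\<^sub>R v) = x"
    and eq: "\<forall>v\<in>V. (if v \<in> \<sigma> then a v else 0) = (if v \<in> \<tau> then b v else 0)"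
  shows "x \<in> convex hull (\<sigma> \<inter> \<tau>)"
proof -
  have fs: "finite \<sigma>" using assms finite_subset by blast
  have z: "\<forall>i\<in>\<sigma> - \<sigma> \<inter> \<tau>. a i = 0"
  proof (intro ballI)
    fix i assume "i \<in> \<sigma> - \<sigma> \<inter> \<tau>"
    then have "i \<in> V" "i \<in> \<sigma>" "i \<notin> \<tau>" using assms(2) by auto
    then show "a i = 0" using eq[rule_format, of i] by simp
  qed
  have "sum a (\<sigma> \<inter> \<tau>) = sum a \<sigma>"
    by (rule sum.mono_neutral_left[OF fs _ z]) auto
  moreover have "(\<Sum>v\<in>\<sigma> \<inter> \<tau>. a v *\<^sub>R v) = (\<Sum>v\<in>\<sigma>. a v *\<^sub>R v)"
    by (rule sum.mono_neutral_left[OF fs]) (use z in auto)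
  ultimately show ?thesis using assms fs
    by (subst convex_hull_finite) (auto intro!: exI[of _ a])
qed

lemma hull_coeffs:
  assumes "finite S" "x \<in> convex hull S"
  obtains a where "\<forall>v\<in>S. 0 \<le> a v" "sum a S = 1" "(\<Sum>v\<in>S. a v *\<^sub>R v) = x"
  using assms by (auto simp: convex_hull_finite)

lemma indep_inter:
  fixes V :: "'a::real_vector set"
  assumes "finite V" "\<not> affine_dependent V" "\<sigma> \<subseteq> V" "\<tau> \<subseteq> V"
  shows "convex hull \<sigma> \<inter> convex hull \<tau> = convex hull (\<sigma> \<inter> \<tau>)"
proof
  show "convex hull (\<sigma> \<inter> \<tau>) \<subseteq> convex hull \<sigma> \<inter> convex hull \<tau>"
    by (simp add: hull_mono)
  show "convex hull \<sigma> \<inter> convex hull \<tau> \<subseteq> convex hull (\<sigma> \<inter> \<tau>)"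
  proof
    fix x assume x: "x \<in> convex hull \<sigma> \<inter> convex hull \<tau>"
    have fs: "finite \<sigma>" "finite \<tau>" using assms finite_subset by blast+
    obtain a where a: "\<forall>v\<in>\<sigma>. 0 \<le> a v" "sum a \<sigma> = 1" "(\<Sum>v\<in>\<sigma>. a v *\<^sub>R v) = x"
      using hull_coeffs[OF fs(1)] x by blast
    obtain b where b: "\<forall>v\<in>\<tau>. 0 \<le> b v" "sum b \<tau> = 1" "(\<Sum>v\<in>\<tau>. b v *\<^sub>R v) = x"
      using hull_coeffs[OF fs(2)] x by blast
    note d = core_dep[OF assms(1,3,4) a(2,3) b(2,3)]
    have "\<forall>v\<in>V. (if v \<in> \<sigma> then a v else 0) - (if v \<in> \<tau> then b v else 0) = 0"
      using assms(2) d assms(1) unfolding affine_dependent_explicit_finite[OF assms(1)] by blast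
    then show "x \<in> convex hull (\<sigma> \<inter> \<tau>)"
      using eq_case[OF assms(1,3,4) a, of b] by simp
  qed
qed

locale circ =
  fixes V :: "'a::euclidean_space set" and u :: "'a \<Rightarrow> real"
  assumes finV: "finite V" and neV: "V \<noteq> {}"
    and propW: "\<And>W. W \<subseteq> V \<Longrightarrow> W \<noteq> V \<Longrightarrow> \<not> affine_dependent W"
    and su: "sum u V = 0" and sv: "(\<Sum>v\<in>V. u v *\<^sub>R v) = 0"
    and nz: "\<forall>v\<in>V. u v \<noteq> 0"
begin

definition "P = {v\<in>V. u v > 0}"
definition "N = {v\<in>V. u v < 0}"

lemma PN: "P \<subseteq> V" "N \<subseteq> V" "P \<inter> N = {}" "V = P \<union> N"
  using nz unfolding P_def N_def by (auto simp: neq_iff)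

lemma P_ne: "P \<noteq> {}"
proof
  assume "P = {}"
  then have "\<forall>v\<in>V. u v \<le> 0" unfolding P_def by (auto simp: not_less)
  then have "\<forall>v\<in>V. - u v = 0" using su sum_nonneg_eq_0_iff[OF finV, of "\<lambda>v. - u v"] by (simp add: sum_negf)
  then show False using nz neV by auto
qed

lemma N_ne: "N \<noteq> {}"
proof
  assume "N = {}"
  then have "\<forall>v\<in>V. u v \<ge> 0" unfolding N_def by (auto simp: not_less)
  then have "\<forall>v\<in>V. u v = 0" using su sum_nonneg_eq_0_iff[OF finV] by blast
  then show False using nz neV by auto
qed

lemma uniq:
  assumes "sum w V = 0" "(\<Sum>v\<in>V. w v *\<^sub>R v) = 0"
  shows "\<exists>l. \<forall>v\<in>V. w v = l * u v"
proof -
  obtain v0 where v0: "v0 \<in> V" using neV by auto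
  define l where "l = w v0 / u v0"
  define g where "g v = w v - l * u v" for v
  have g0: "g v0 = 0" using nz v0 unfolding g_def l_def by auto
  have "sum g V = 0" using assms su unfolding g_def by (simp add: sum_subtractf sum_distrib_left[symmetric])
  then have s1: "sum g (V - {v0}) = 0" using g0 v0 finV by (simp add: sum_diff1)
  have "(\<Sum>v\<in>V. g v *\<^sub>R v) = 0" using assms sv unfolding g_def
    by (simp add: sum_subtractf scaleR_left_diff_distrib scaleR_sum_right[symmetric] scaleR_scaleR[symmetric] del: scaleR_scaleR)
  then have s2: "(\<Sum>v\<in>V - {v0}. g v *\<^sub>R v) = 0" using g0 v0 finV by (simp add: sum_diff1)
  have "\<not> affine_dependent (V - {v0})" using propW v0 by auto
  then have "\<forall>v\<in>V - {v0}. g v = 0" using s1 s2 finV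
    unfolding affine_dependent_explicit_finite[OF finite_Diff[OF finV]] by blast
  then have "\<forall>v\<in>V. g v = 0" using g0 by auto
  then show ?thesis unfolding g_def by auto
qed

lemma core:
  assumes "\<sigma> \<subseteq> V" "\<tau> \<subseteq> V"
    and "sum a \<sigma> = 1" "(\<Sum>v\<in>\<sigma>. a v *\<^sub>R v) = x"
    and "sum b \<tau> = 1" "(\<Sum>v\<in>\<tau>. b v *\<^sub>R v) = x"
  shows "\<exists>l. \<forall>v\<in>V. (if v \<in> \<sigma> then a v else 0) - (if v \<in> \<tau> then b v else 0) = l * u v"
  using uniq core_dep[OF finV assms] by blast


lemma tri:
  assumes F: "\<forall>\<sigma>\<in>F. \<sigma> \<subseteq> V \<and> \<not> P \<subseteq> \<sigma>"
  shows "\<exists>T. triangulation_of T V \<and> F \<subseteq> T"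
proof -
  define T where "T = {\<sigma>. \<sigma> \<subseteq> V \<and> \<not> P \<subseteq> \<sigma>}"
  have fT: "finite T" unfolding T_def using finV by (rule rev_finite_subset[OF finite_Pow_iff[THEN iffD2]]) auto
  have indT: "\<forall>\<sigma>\<in>T. \<sigma> \<subseteq> V \<and> \<not> affine_dependent \<sigma>"
    unfolding T_def using propW PN(1) by blast
  have subT: "\<forall>\<sigma>\<in>T. \<forall>\<tau>. \<tau> \<subseteq> \<sigma> \<longrightarrow> \<tau> \<in> T" unfolding T_def by blast
  have intT: "\<forall>\<sigma>\<in>T. \<forall>\<tau>\<in>T. convex hull \<sigma> \<inter> convex hull \<tau> = convex hull (\<sigma> \<inter> \<tau>)"
  proof (intro ballI)
    fix \<sigma> \<tau> assume s: "\<sigma> \<in> T" and t: "\<tau> \<in> T"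
    then have sV: "\<sigma> \<subseteq> V" "\<tau> \<subseteq> V" and nP: "\<not> P \<subseteq> \<sigma>" "\<not> P \<subseteq> \<tau>" unfolding T_def by auto
    show "convex hull \<sigma> \<inter> convex hull \<tau> = convex hull (\<sigma> \<inter> \<tau>)"
    proof
      show "convex hull (\<sigma> \<inter> \<tau>) \<subseteq> convex hull \<sigma> \<inter> convex hull \<tau>"
        by (simp add: hull_mono)
      show "convex hull \<sigma> \<inter> convex hull \<tau> \<subseteq> convex hull (\<sigma> \<inter> \<tau>)"
      proof
        fix x assume x: "x \<in> convex hull \<sigma> \<inter> convex hull \<tau>"
        have fs: "finite \<sigma>" "finite \<tau>" using sV finV finite_subset by blast+
        obtain a where a: "\<forall>v\<in>\<sigma>. 0 \<le> a v" "sum a \<sigma> = 1" "(\<Sum>v\<in>\<sigma>. a v *\<^sub>R v) = x"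
          using hull_coeffs[OF fs(1)] x by blast
        obtain b where b: "\<forall>v\<in>\<tau>. 0 \<le> b v" "sum b \<tau> = 1" "(\<Sum>v\<in>\<tau>. b v *\<^sub>R v) = x"
          using hull_coeffs[OF fs(2)] x by blast
        obtain l where l: "\<forall>v\<in>V. (if v \<in> \<sigma> then a v else 0) - (if v \<in> \<tau> then b v else 0) = l * u v"
          using core[OF sV a(2,3) b(2,3)] by blast
        obtain p1 where p1: "p1 \<in> P" "p1 \<notin> \<sigma>" using nP by auto
        obtain p2 where p2: "p2 \<in> P" "p2 \<notin> \<tau>" using nP by auto
        have up: "\<forall>v\<in>P. u v > 0" "P \<subseteq> V" unfolding P_def by auto
        have "\<not> l > 0"
        proof
          assume "l > 0"
          then have "l * u p1 > 0" using up p1 by simp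
          moreover have "(if p1 \<in> \<tau> then b p1 else 0) \<ge> 0" using b(1) by simp
          ultimately show False using l[rule_format, of p1] p1 up by auto
        qed
        moreover have "\<not> l < 0"
        proof
          assume "l < 0"
          then have "l * u p2 < 0" using up p2 by (simp add: mult_neg_pos)
          moreover have "(if p2 \<in> \<sigma> then a p2 else 0) \<ge> 0" using a(1) by simp
          ultimately show False using l[rule_format, of p2] p2 up by auto
        qed
        ultimately have "l = 0" by simp
        then show "x \<in> convex hull (\<sigma> \<inter> \<tau>)"
          using eq_case[OF finV sV a, of b] l by simp
      qed
    qed
  qed
  have unT: "\<Union> ((\<lambda>\<sigma>. convex hull \<sigma>) ` T) = convex hull V"
  proof
    show "\<Union> ((\<lambda>\<sigma>. convex hull \<sigma>) ` T) \<subseteq> convex hull V"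
      unfolding T_def by (auto dest: hull_mono[of _ V])
    show "convex hull V \<subseteq> \<Union> ((\<lambda>\<sigma>. convex hull \<sigma>) ` T)"
    proof
      fix x assume x: "x \<in> convex hull V"
      obtain a where a: "\<forall>v\<in>V. 0 \<le> a v" "sum a V = 1" "(\<Sum>v\<in>V. a v *\<^sub>R v) = x"
        using hull_coeffs[OF finV] x by blast
      have fP: "finite P" using PN(1) finV finite_subset by blast
      define \<mu> where "\<mu> = Min ((\<lambda>v. a v / u v) ` P)"
      have up: "\<forall>v\<in>P. u v > 0" unfolding P_def by auto
      have "\<mu> \<in> (\<lambda>v. a v / u v) ` P" unfolding \<mu>_def using fP P_ne by (intro Min_in) auto
      then obtain v1 where v1: "v1 \<in> P" "\<mu> = a v1 / u v1" by auto
      have mle: "\<mu> \<le> a v / u v" if "v \<in> P" for v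
        unfolding \<mu>_def using fP that by simp
      have "a v1 \<ge> 0" "u v1 > 0" using v1 up a(1) PN(1) by auto
      then have m0: "\<mu> \<ge> 0" unfolding v1(2) by (rule divide_nonneg_pos)
      define a2 where "a2 v = a v - \<mu> * u v" for v
      have a2nn: "\<forall>v\<in>V. 0 \<le> a2 v"
      proof
        fix v assume v: "v \<in> V"
        show "0 \<le> a2 v"
        proof (cases "v \<in> P")
          case True
          then have "\<mu> \<le> a v / u v" by (rule mle)
          then have "\<mu> * u v \<le> a v" using up True by (simp add: pos_le_divide_eq)
          then show ?thesis unfolding a2_def by simp
        next
          case False
          then have "u v \<le> 0" using v unfolding P_def by auto
          then have "\<mu> * u v \<le> 0" using m0 by (simp add: mult_nonneg_nonpos)
          moreover have "0 \<le> a v" using a(1) v by blast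
          ultimately show ?thesis unfolding a2_def by linarith
        qed
      qed
      have a2s: "sum a2 V = 1" unfolding a2_def using a(2) su
        by (simp add: sum_subtractf sum_distrib_left[symmetric])
      have a2v: "(\<Sum>v\<in>V. a2 v *\<^sub>R v) = x" unfolding a2_def using a(3) sv
        by (simp add: sum_subtractf scaleR_left_diff_distrib scaleR_sum_right[symmetric] scaleR_scaleR[symmetric] del: scaleR_scaleR)
      have "u v1 > 0" using v1 up by blast
      then have a21: "a2 v1 = 0" unfolding a2_def using v1 by simp
      have v1V: "v1 \<in> V" using v1 PN(1) by auto
      have "sum a2 (V - {v1}) = 1" using a2s a21 v1V finV by (simp add: sum_diff1)
      moreover have "(\<Sum>v\<in>V - {v1}. a2 v *\<^sub>R v) = x" using a2v a21 v1V finV by (simp add: sum_diff1)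
      ultimately have "x \<in> convex hull (V - {v1})" using a2nn finV
        by (subst convex_hull_finite) (auto intro!: exI[of _ a2])
      moreover have "V - {v1} \<in> T" unfolding T_def using v1 by auto
      ultimately show "x \<in> \<Union> ((\<lambda>\<sigma>. convex hull \<sigma>) ` T)" by blast
    qed
  qed
  have "F \<subseteq> T" using F unfolding T_def by auto
  then show ?thesis using fT indT subT intT unT unfolding triangulation_of_def by blast
qed

lemma sign:
  assumes sV: "\<sigma> \<subseteq> V" "\<tau> \<subseteq> V" and ne: "\<sigma> \<noteq> V" "\<tau> \<noteq> V"
    and PS: "P \<subseteq> \<sigma>" and NT: "N \<subseteq> \<tau>"
  shows "overlap \<sigma> \<tau>"
proof (rule ccontr)
  assume nov: "\<not> overlap \<sigma> \<tau>"
  have "convex hull (\<sigma> \<inter> \<tau>) \<subseteq> convex hull \<sigma> \<inter> convex hull \<tau>" by (simp add: hull_mono)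
  then have heq: "convex hull \<sigma> \<inter> convex hull \<tau> \<subseteq> convex hull (\<sigma> \<inter> \<tau>)"
    using nov unfolding overlap_def by blast
  have fP: "finite P" "finite N" using PN finV finite_subset by blast+
  define c where "c = sum u P"
  have up: "\<forall>v\<in>P. u v > 0" and un: "\<forall>v\<in>N. u v < 0" unfolding P_def N_def by auto
  have c0: "c > 0" unfolding c_def using sum_pos[OF fP(1) P_ne] up by blast
  have sPN: "sum u V = sum u P + sum u N"
  proof -
    have "sum u (P \<union> N) = sum u P + sum u N" by (rule sum.union_disjoint) (use fP PN in auto)
    then show ?thesis using PN(4) by simp
  qed
  have vPN: "(\<Sum>v\<in>V. u v *\<^sub>R v) = (\<Sum>v\<in>P. u v *\<^sub>R v) + (\<Sum>v\<in>N. u v *\<^sub>R v)"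
  proof -
    have "(\<Sum>v\<in>P \<union> N. u v *\<^sub>R v) = (\<Sum>v\<in>P. u v *\<^sub>R v) + (\<Sum>v\<in>N. u v *\<^sub>R v)"
      by (rule sum.union_disjoint) (use fP PN in auto)
    then show ?thesis using PN(4) by simp
  qed
  define a where "a v = u v / c" for v
  define p where "p = (\<Sum>v\<in>P. a v *\<^sub>R v)"
  have as: "sum a P = 1" unfolding a_def c_def using c0 c_def by (simp add: sum_divide_distrib[symmetric])
  have "p \<in> convex hull P" unfolding p_def using fP as up c0
    by (subst convex_hull_finite) (auto intro!: exI[of _ a] simp: a_def)
  then have p1: "p \<in> convex hull \<sigma>" using hull_mono[OF PS] by blast
  define a' where "a' v = - u v / c" for v
  have "sum u N = - c" using sPN su c_def by linarith
  moreover have "sum a' N = (\<Sum>v\<in>N. - u v) / c" unfolding a'_def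
    by (rule sum_divide_distrib[symmetric])
  moreover have "(\<Sum>v\<in>N. - u v) = - sum u N" by (rule sum_negf)
  ultimately have "sum a' N = c / c" by simp
  then have as': "sum a' N = 1" using c0 by simp
  have "(\<Sum>v\<in>N. a' v *\<^sub>R v) = - (1/c) *\<^sub>R (\<Sum>v\<in>N. u v *\<^sub>R v)"
    unfolding a'_def by (simp add: scaleR_sum_right)
  also have "\<dots> = (1/c) *\<^sub>R (\<Sum>v\<in>P. u v *\<^sub>R v)"
  proof -
    have e: "(\<Sum>v\<in>P. u v *\<^sub>R v) + (\<Sum>v\<in>N. u v *\<^sub>R v) = 0" using vPN sv by simp
    show ?thesis by (simp add: minus_unique[OF e, symmetric])
  qed
  also have "\<dots> = p" unfolding p_def a_def by (simp add: scaleR_sum_right)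
  finally have pN: "(\<Sum>v\<in>N. a' v *\<^sub>R v) = p" .
  have "p \<in> convex hull N" using fP as' un c0 pN
    by (subst convex_hull_finite) (auto intro!: exI[of _ a'] simp: a'_def divide_nonpos_pos)
  then have p2: "p \<in> convex hull \<tau>" using hull_mono[OF NT] by blast
  have "p \<in> convex hull (\<sigma> \<inter> \<tau>)" using heq p1 p2 by blast
  moreover have fr: "finite (\<sigma> \<inter> \<tau>)" using sV finV finite_subset by blast
  ultimately obtain b where b: "\<forall>v\<in>\<sigma> \<inter> \<tau>. 0 \<le> b v" "sum b (\<sigma> \<inter> \<tau>) = 1" "(\<Sum>v\<in>\<sigma> \<inter> \<tau>. b v *\<^sub>R v) = p"
    using hull_coeffs by blast
  have rV: "\<sigma> \<inter> \<tau> \<subseteq> V" using sV by auto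
  obtain l where l: "\<forall>v\<in>V. (if v \<in> P then a v else 0) - (if v \<in> \<sigma> \<inter> \<tau> then b v else 0) = l * u v"
    using core[OF PN(1) rV as p_def[symmetric] b(2,3)] by blast
  have "V = P \<union> N" by (rule PN)
  show False
  proof (cases "l = 0")
    case True
    have "P \<subseteq> \<sigma> \<inter> \<tau>"
    proof
      fix v assume v: "v \<in> P"
      then have "a v > 0" using up c0 unfolding a_def by simp
      then show "v \<in> \<sigma> \<inter> \<tau>" using l[rule_format, of v] v PN(1) True by (auto split: if_splits)
    qed
    then have "V \<subseteq> \<tau>" using NT PN(4) by auto
    then show False using ne sV by auto
  next
    case False
    obtain n where n: "n \<in> N" using N_ne by auto
    then have nV: "n \<in> V" "n \<notin> P" using PN by auto
    have ln: "- (if n \<in> \<sigma> \<inter> \<tau> then b n else 0) = l * u n" using l[rule_format, OF nV(1)] nV(2) by simp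
    show False
    proof (cases "l < 0")
      case True
      then have "l * u n > 0" using un n by (simp add: mult_neg_neg)
      moreover have "(if n \<in> \<sigma> \<inter> \<tau> then b n else 0) \<ge> 0" using b(1) by simp
      ultimately show False using ln by linarith
    next
      case lp: False
      with False have lp: "l > 0" by simp
      have "N \<subseteq> \<sigma> \<inter> \<tau>"
      proof
        fix v assume v: "v \<in> N"
        then have vV: "v \<in> V" "v \<notin> P" using PN by auto
        have "l * u v < 0" using lp un v by (simp add: mult_pos_neg)
        then show "v \<in> \<sigma> \<inter> \<tau>" using l[rule_format, OF vV(1)] vV(2) by (auto split: if_splits)
      qed
      then have "V \<subseteq> \<sigma>" using PS PN(4) by auto
      then show False using ne sV by auto
    qed
  qed
qed

end

theorem proposition4p5:
  fixes e :: "'n::finite \<Rightarrow> nat"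
    and F :: "(real ^ 'n) set set"
    and V :: "(real ^ 'n) set"
  assumes "coord_enum e"
    and "\<forall>\<sigma>\<in>F. curve_simplex e \<sigma>"
    and "\<forall>\<sigma>\<in>F. \<forall>\<tau>\<in>F. \<sigma> \<noteq> \<tau> \<longrightarrow> \<not> overlap \<sigma> \<tau>"
    and "V = \<Union> F"
    and "CARD('n) + 1 \<le> card V" and "card V \<le> CARD('n) + 2"
  shows "\<exists>T. triangulation_of T V \<and> F \<subseteq> T"
proof -
  have cpos: "card V > 0" using assms(5) by simp
  then have finV: "finite V" using card_ge_0_finite by blast
  have FV: "\<forall>\<sigma>\<in>F. \<sigma> \<subseteq> V" using assms(4) by auto
  have Vm: "V \<subseteq> moment_curve e" using assms(2,4) unfolding curve_simplex_def by auto
  have cardF: "\<forall>\<sigma>\<in>F. card \<sigma> \<le> CARD('n) + 1" using assms(2) unfolding curve_simplex_def by auto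
  have small: "\<not> affine_dependent W" if "W \<subseteq> V" "card W \<le> CARD('n) + 1" for W
  proof -
    have "finite W" using that(1) finV by (rule finite_subset)
    moreover have "W \<subseteq> moment_curve e" using that(1) Vm by (rule subset_trans)
    ultimately show ?thesis using moment_indep[OF assms(1)] that(2) by blast
  qed
  consider "card V = CARD('n) + 1" | "card V = CARD('n) + 2" using assms(5,6) by linarith
  then show ?thesis
  proof cases
    case 1
    have iV: "\<not> affine_dependent V" using small 1 by simp
    have "triangulation_of (Pow V) V"
      unfolding triangulation_of_def
    proof (intro conjI ballI allI impI)
      show "finite (Pow V)" using finV by simp
    next
      fix \<sigma> assume "\<sigma> \<in> Pow V"
      then show "\<sigma> \<subseteq> V" by simp
      show "\<not> affine_dependent \<sigma>" using iV \<open>\<sigma> \<in> Pow V\<close> affine_independent_subset by blast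
    next
      fix \<sigma> \<tau> assume "\<sigma> \<in> Pow V" "\<tau> \<subseteq> \<sigma>"
      then show "\<tau> \<in> Pow V" by auto
    next
      fix \<sigma> \<tau> assume "\<sigma> \<in> Pow V" "\<tau> \<in> Pow V"
      then show "convex hull \<sigma> \<inter> convex hull \<tau> = convex hull (\<sigma> \<inter> \<tau>)"
        using indep_inter[OF finV iV] by auto
    next
      show "\<Union> ((\<lambda>\<sigma>. convex hull \<sigma>) ` Pow V) = convex hull V"
        by (auto dest: hull_mono[of _ V])
    qed
    moreover have "F \<subseteq> Pow V" using FV by auto
    ultimately show ?thesis by blast
  next
    case 2
    have "affine_dependent V" using affine_dependent_biggerset[OF finV] 2 by simp
    then obtain u0 where u0: "sum u0 V = 0" "\<exists>v\<in>V. u0 v \<noteq> 0" "(\<Sum>v\<in>V. u0 v *\<^sub>R v) = 0"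
      using affine_dependent_explicit_finite[OF finV] by blast
    have propW: "\<not> affine_dependent W" if "W \<subseteq> V" "W \<noteq> V" for W
    proof -
      have "card W < card V" using that finV by (simp add: psubset_card_mono)
      then show ?thesis using small that 2 by simp
    qed
    have nz: "\<forall>v\<in>V. u0 v \<noteq> 0"
    proof (rule ccontr)
      assume "\<not> (\<forall>v\<in>V. u0 v \<noteq> 0)"
      then obtain v where v: "v \<in> V" "u0 v = 0" by auto
      have "sum u0 (V - {v}) = 0" using u0(1) v finV by (simp add: sum_diff1)
      moreover have "(\<Sum>w\<in>V - {v}. u0 w *\<^sub>R w) = 0" using u0(3) v finV by (simp add: sum_diff1)
      moreover have "\<exists>w\<in>V - {v}. u0 w \<noteq> 0" using u0(2) v by auto
      ultimately have "affine_dependent (V - {v})"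
        unfolding affine_dependent_explicit_finite[OF finite_Diff[OF finV]] by blast
      then show False using propW[of "V - {v}"] v by auto
    qed
    have neV: "V \<noteq> {}" using cpos by auto
    interpret c1: circ V u0 using finV neV propW u0 nz by unfold_locales auto
    show ?thesis
    proof (cases "\<forall>\<sigma>\<in>F. \<not> c1.P \<subseteq> \<sigma>")
      case True
      then show ?thesis by (intro c1.tri) (use FV in auto)
    next
      case False
      then obtain \<sigma>0 where s0: "\<sigma>0 \<in> F" "c1.P \<subseteq> \<sigma>0" by auto
      have neq: "\<sigma> \<noteq> V" if "\<sigma> \<in> F" for \<sigma>
        using cardF that 2 by auto
      have noN: "\<forall>\<tau>\<in>F. \<not> c1.N \<subseteq> \<tau>"
      proof (intro ballI notI)
        fix \<tau> assume t: "\<tau> \<in> F" "c1.N \<subseteq> \<tau>"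
        have "\<sigma>0 \<noteq> \<tau>"
        proof
          assume "\<sigma>0 = \<tau>"
          then have "V \<subseteq> \<sigma>0" using s0 t c1.PN(4) by auto
          then show False using neq[OF s0(1)] FV s0(1) by auto
        qed
        moreover have "overlap \<sigma>0 \<tau>"
          by (rule c1.sign) (use FV s0 t neq in auto)
        ultimately show False using assms(3) s0(1) t(1) by blast
      qed
      interpret c2: circ V "\<lambda>v. - u0 v"
      proof
        show "finite V" "V \<noteq> {}" by (fact finV, fact neV)
        show "\<And>W. W \<subseteq> V \<Longrightarrow> W \<noteq> V \<Longrightarrow> \<not> affine_dependent W" by (rule propW)
        show "(\<Sum>v\<in>V. - u0 v) = 0" using u0(1) by (simp add: sum_negf)
        show "(\<Sum>v\<in>V. - u0 v *\<^sub>R v) = 0" using u0(3) by (simp add: sum_negf)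
        show "\<forall>v\<in>V. - u0 v \<noteq> 0" using nz by simp
      qed
      have "c2.P = c1.N" unfolding c2.P_def c1.N_def by auto
      then show ?thesis by (intro c2.tri) (use noN FV in auto)
    qed
  qed
qed

end
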